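(* In the setting of the context, on the event $\mathcal E_0=\{\theta^*\in\mathcal B_k\cap\mathcal C_k\text{ for all }k\ge1\}$, for every episode $k$, all states $s$, actions $a$ and stages $h=1,\dots,H+1$, \[ Q^{\pi^*}_h(s,a)\le\widehat Q_{k,h}(s,a),\qquad V^{\pi^*}_h(s)\le\widehat V_{k,h}(s). \]
   Context: Online MDP $(\mathcal S,\mathcal A,P,r,H,s_1)$ with known reward $r:\mathcal S\times\mathcal A\to[0,1]$ and $P(s'\mid s,a)=\langle\theta^*,\phi(s'\mid s,a)\rangle$ for a known feature map $\phi:\mathcal S\times\mathcal A\times\mathcal S\to\mathbb R^d$; $\phi_j(\cdot\mid s,a)\in\mathbb R^{|\mathcal S|}$ denotes $(\phi_j(s'\mid s,a))_{s'}$. $\pi^*$ is an optimal policy, $Q^{\pi^*}_h(s,a)=\mathbb E_{\pi^*}[\sum_{i=h}^Hr(s_i,a_i)\mid s_h=s,a_h=a]$, $V^{\pi^*}_h(s)=\max_aQ^{\pi^*}_h(s,a)$, $Q^{\pi^*}_{H+1}\equiv0$. In episode $k$ the algorithm O-O UCRL-VTR has two sets $\mathcal B_k,\mathcal C_k\subset\mathbb R^d$ (ellipsoidal confidence sets around an offline–online and an online-only ridge estimator) and computes $\widehat Q_{k,H+1}\equiv0$ and, for $h=H,\dots,1$, $\widehat Q_{k,h}(s,a)=r(s,a)+\max_{\theta\in\mathcal B_k\cap\mathcal C_k}\sum_{j=1}^d\theta_j\phi_j(\cdot\mid s,a)^\top\widehat V_{k,h+1}$, $\widehat V_{k,h}(s)=\max_a\widehat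 Q_{k,h}(s,a)$ (with $\widehat V_{k,H+1}=0$). *)

theory Defs
  imports "HOL-Analysis.Analysis"
begin

definition trans_prob :: "real^'d \<Rightarrow> ('s \<Rightarrow> 'act \<Rightarrow> 's \<Rightarrow> real^'d) \<Rightarrow> 's \<Rightarrow> 'act \<Rightarrow> 's \<Rightarrow> real" where
  "trans_prob \<theta> \<phi> s a s' = \<theta> \<bullet> \<phi> s a s'"

text \<open>Policy evaluation of a deterministic (nonstationary) Markov policy pi (pi h s = action at stage h).
  Qpi_aux ... h n s a is Q^pi_h(s,a) when n = H+1-h steps (stages h..H) remain.\<close>
primrec Qpi_aux :: "('s::finite \<Rightarrow> 'act \<Rightarrow> 's \<Rightarrow> real) \<Rightarrow> ('s \<Rightarrow> 'act \<Rightarrow> real) \<Rightarrow> (nat \<Rightarrow> 's \<Rightarrow> 'act)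
     \<Rightarrow> nat \<Rightarrow> nat \<Rightarrow> 's \<Rightarrow> 'act \<Rightarrow> real" where
  "Qpi_aux P r \<pi> h 0 s a = 0"
| "Qpi_aux P r \<pi> h (Suc n) s a =
     r s a + (\<Sum>s'\<in>UNIV. P s a s' * Qpi_aux P r \<pi> (Suc h) n s' (\<pi> (Suc h) s'))"

definition Qpi :: "('s::finite \<Rightarrow> 'act \<Rightarrow> 's \<Rightarrow> real) \<Rightarrow> ('s \<Rightarrow> 'act \<Rightarrow> real) \<Rightarrow> nat \<Rightarrow> (nat \<Rightarrow> 's \<Rightarrow> 'act)
     \<Rightarrow> nat \<Rightarrow> 's \<Rightarrow> 'act \<Rightarrow> real" where
  "Qpi P r H \<pi> h s a = Qpi_aux P r \<pi> h (H + 1 - h) s a"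

definition Vpi :: "('s::finite \<Rightarrow> 'act \<Rightarrow> 's \<Rightarrow> real) \<Rightarrow> ('s \<Rightarrow> 'act \<Rightarrow> real) \<Rightarrow> nat \<Rightarrow> (nat \<Rightarrow> 's \<Rightarrow> 'act)
     \<Rightarrow> nat \<Rightarrow> 's \<Rightarrow> real" where
  "Vpi P r H \<pi> h s = Qpi P r H \<pi> h s (\<pi> h s)"

definition ellipsoid :: "real^'d \<Rightarrow> real^'d^'d \<Rightarrow> real \<Rightarrow> (real^'d) set" where
  "ellipsoid c A \<beta> = {\<theta>. (\<theta> - c) \<bullet> (A *v (\<theta> - c)) \<le> \<beta>}"

definition pos_def_matrix :: "real^'d^'d \<Rightarrow> bool" where
  "pos_def_matrix A \<longleftrightarrow> transpose A = A \<and> (\<forall>x. x \<noteq> 0 \<longrightarrow> x \<bullet> (A *v x) > 0)"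

definition Qopt_step :: "('s::finite \<Rightarrow> 'act \<Rightarrow> real) \<Rightarrow> ('s \<Rightarrow> 'act \<Rightarrow> 's \<Rightarrow> real^'d::finite) \<Rightarrow> (real^'d) set
     \<Rightarrow> ('s \<Rightarrow> real) \<Rightarrow> 's \<Rightarrow> 'act \<Rightarrow> real" where
  "Qopt_step r \<phi> \<Theta> V s a =
     r s a + (SUP \<theta>\<in>\<Theta>. (\<Sum>j\<in>UNIV. \<theta> $ j * (\<Sum>s'\<in>UNIV. (\<phi> s a s') $ j * V s')))"

text \<open>Vhat_aux ... n s is the optimistic value with n stages remaining (Vhat_{k,h} with n = H+1-h).\<close>
primrec Vhat_aux :: "('s::finite \<Rightarrow> 'act::finite \<Rightarrow> real) \<Rightarrow> ('s \<Rightarrow> 'act \<Rightarrow> 's \<Rightarrow> real^'d::finite)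
     \<Rightarrow> (real^'d) set \<Rightarrow> nat \<Rightarrow> 's \<Rightarrow> real" where
  "Vhat_aux r \<phi> \<Theta> 0 s = 0"
| "Vhat_aux r \<phi> \<Theta> (Suc n) s = Max (range (\<lambda>a. Qopt_step r \<phi> \<Theta> (Vhat_aux r \<phi> \<Theta> n) s a))"

definition Qhat :: "('s::finite \<Rightarrow> 'act::finite \<Rightarrow> real) \<Rightarrow> ('s \<Rightarrow> 'act \<Rightarrow> 's \<Rightarrow> real^'d::finite)
     \<Rightarrow> nat \<Rightarrow> (real^'d) set \<Rightarrow> nat \<Rightarrow> 's \<Rightarrow> 'act \<Rightarrow> real" where
  "Qhat r \<phi> H \<Theta> h s a = (if h \<le> H then Qopt_step r \<phi> \<Theta> (Vhat_aux r \<phi> \<Theta> (H - h)) s a else 0)"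

definition Vhat :: "('s::finite \<Rightarrow> 'act::finite \<Rightarrow> real) \<Rightarrow> ('s \<Rightarrow> 'act \<Rightarrow> 's \<Rightarrow> real^'d::finite)
     \<Rightarrow> nat \<Rightarrow> (real^'d) set \<Rightarrow> nat \<Rightarrow> 's \<Rightarrow> real" where
  "Vhat r \<phi> H \<Theta> h s = Vhat_aux r \<phi> \<Theta> (H + 1 - h) s"

end

theory Submission
  imports Defs
begin

lemma pd_lower:
  fixes A :: "real^'d^'d"
  assumes "pos_def_matrix A"
  shows "\<exists>m>0. \<forall>x. m * (norm x)^2 \<le> x \<bullet> (A *v x)"
proof -
  let ?f = "\<lambda>x::real^'d. x \<bullet> (A *v x)"
  have cont: "continuous_on (sphere 0 1) ?f"
    by (intro continuous_intros linear_continuous_on bounded_linear_intros) auto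
  have ne: "sphere (0::real^'d) 1 \<noteq> {}"
    proof -
    have "axis undefined (1::real) \<in> sphere (0::real^'d) 1" by simp
    thus ?thesis by blast
  qed
  obtain x0 where x0: "x0 \<in> sphere 0 1" and mn: "\<And>y. y \<in> sphere 0 1 \<Longrightarrow> ?f x0 \<le> ?f y"
    using continuous_attains_inf[OF compact_sphere ne cont] by blast
  have "x0 \<noteq> 0" using x0 by auto
  hence pos: "?f x0 > 0" using assms unfolding pos_def_matrix_def by blast
  have "\<forall>x. ?f x0 * (norm x)^2 \<le> ?f x"
  proof
    fix x :: "real^'d"
    show "?f x0 * (norm x)^2 \<le> ?f x"
    proof (cases "x = 0")
      case True then show ?thesis by simp
    next
      case False
      define u where "u = (1/norm x) *\<^sub>R x"
      have u: "u \<in> sphere 0 1" using False by (simp add: u_def)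
      have xu: "x = norm x *\<^sub>R u" using False by (simp add: u_def)
      have "?f x = (norm x)^2 * ?f u"
        apply (subst (1 2) xu)
        by (simp add: linear_cmul[OF matrix_vector_mul_linear] power2_eq_square)
      moreover have "?f x0 \<le> ?f u" using mn u by blast
      ultimately show ?thesis
        by (metis mult.commute mult_right_mono zero_le_power2)
    qed
  qed
  thus ?thesis using pos by blast
qed

lemma ellipsoid_bounded:
  assumes "pos_def_matrix A"
  shows "bounded (ellipsoid c A \<beta>)"
proof -
  obtain m where m: "m > 0" "\<And>x. m * (norm x)^2 \<le> x \<bullet> (A *v x)"
    using pd_lower[OF assms] by blast
  have "\<forall>\<theta>\<in>ellipsoid c A \<beta>. norm \<theta> \<le> norm c + max 1 (\<beta>/m)"
  proof
    fix \<theta> assume "\<theta> \<in> ellipsoid c A \<beta>"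
    hence e: "m * (norm (\<theta> - c))^2 \<le> \<beta>" using m(2)[of "\<theta> - c"] unfolding ellipsoid_def by auto
    define y where "y = norm (\<theta> - c)"
    have "y \<le> max 1 (\<beta>/m)"
    proof (cases "y \<le> 1")
      case False
      hence "y \<le> y^2" by (simp add: power2_eq_square)
      moreover have "y^2 \<le> \<beta>/m" using e m(1) unfolding y_def by (simp add: field_simps)
      ultimately show ?thesis by linarith
    qed simp
    moreover have "norm \<theta> \<le> norm c + y" unfolding y_def by (metis add_diff_cancel_left' norm_triangle_sub add.commute)
    ultimately show "norm \<theta> \<le> norm c + max 1 (\<beta>/m)" by linarith
  qed
  thus ?thesis unfolding bounded_iff by blast
qed

lemma bdd_lin:
  fixes \<Theta> :: "(real^'d) set"
  assumes "bounded \<Theta>"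
  shows "bdd_above ((\<lambda>\<theta>. \<Sum>j\<in>UNIV. \<theta> $ j * w j) ` \<Theta>)"
proof -
  obtain B where B: "\<And>x. x \<in> \<Theta> \<Longrightarrow> norm x \<le> B" using assms unfolding bounded_iff by blast
  define w' :: "real^'d" where "w' = (\<chi> j. w j)"
  have "\<And>\<theta>. (\<Sum>j\<in>UNIV. \<theta> $ j * w j) = \<theta> \<bullet> w'" by (simp add: inner_vec_def w'_def)
  moreover have "\<And>\<theta>. \<theta> \<in> \<Theta> \<Longrightarrow> \<theta> \<bullet> w' \<le> B * norm w'"
    by (metis B norm_cauchy_schwarz mult_right_mono norm_ge_zero order_trans)
  ultimately show ?thesis unfolding bdd_above_def by (metis (no_types, lifting) imageE)
qed


lemma swap_sum:
  "(\<Sum>s'\<in>UNIV. trans_prob \<theta> \<phi> s a s' * V s') = (\<Sum>j\<in>UNIV. \<theta> $ j * (\<Sum>s'\<in>UNIV. (\<phi> s a s') $ j * V s'))"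
proof -
  have "(\<Sum>s'\<in>UNIV. trans_prob \<theta> \<phi> s a s' * V s') = (\<Sum>s'\<in>UNIV. \<Sum>j\<in>UNIV. \<theta> $ j * ((\<phi> s a s') $ j * V s'))"
    unfolding trans_prob_def inner_vec_def by (simp add: sum_distrib_right mult.assoc)
  also have "\<dots> = (\<Sum>j\<in>UNIV. \<Sum>s'\<in>UNIV. \<theta> $ j * ((\<phi> s a s') $ j * V s'))" by (rule sum.swap)
  also have "\<dots> = (\<Sum>j\<in>UNIV. \<theta> $ j * (\<Sum>s'\<in>UNIV. (\<phi> s a s') $ j * V s'))" by (simp add: sum_distrib_left)
  finally show ?thesis .
qed

lemma Q_step:
  fixes r :: "'s::finite \<Rightarrow> 'act::finite \<Rightarrow> real" and \<phi> :: "'s \<Rightarrow> 'act \<Rightarrow> 's \<Rightarrow> real^'d::finite"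
  assumes P_nonneg: "\<And>s a s'. 0 \<le> trans_prob \<theta> \<phi> s a s'"
    and th: "\<theta> \<in> \<Theta>" and bd: "bounded \<Theta>"
    and IH: "\<And>s. Max (range (\<lambda>a. Qpi_aux (trans_prob \<theta> \<phi>) r \<pi> (Suc h) n s a)) \<le> Vhat_aux r \<phi> \<Theta> n s"
  shows "Qpi_aux (trans_prob \<theta> \<phi>) r \<pi> h (Suc n) s a \<le> Qopt_step r \<phi> \<Theta> (Vhat_aux r \<phi> \<Theta> n) s a"
proof -
  let ?P = "trans_prob \<theta> \<phi>"
  let ?V = "Vhat_aux r \<phi> \<Theta> n"
  have "\<And>s'. Qpi_aux ?P r \<pi> (Suc h) n s' (\<pi> (Suc h) s') \<le> ?V s'"
    using IH by (meson Max_ge finite UNIV_I dual_order.trans finite_imageI rangeI)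
  hence "(\<Sum>s'\<in>UNIV. ?P s a s' * Qpi_aux ?P r \<pi> (Suc h) n s' (\<pi> (Suc h) s'))
      \<le> (\<Sum>s'\<in>UNIV. ?P s a s' * ?V s')"
    by (intro sum_mono mult_left_mono P_nonneg)
  also have "\<dots> = (\<Sum>j\<in>UNIV. \<theta> $ j * (\<Sum>s'\<in>UNIV. (\<phi> s a s') $ j * ?V s'))" by (rule swap_sum)
  also have "\<dots> \<le> (SUP \<theta>\<in>\<Theta>. (\<Sum>j\<in>UNIV. \<theta> $ j * (\<Sum>s'\<in>UNIV. (\<phi> s a s') $ j * ?V s')))"
    by (rule cSUP_upper[OF th bdd_lin[OF bd]])
  finally show ?thesis by (simp add: Qopt_step_def)
qed

lemma V_ind:
  fixes r :: "'s::finite \<Rightarrow> 'act::finite \<Rightarrow> real" and \<phi> :: "'s \<Rightarrow> 'act \<Rightarrow> 's \<Rightarrow> real^'d::finite"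
  assumes P_nonneg: "\<And>s a s'. 0 \<le> trans_prob \<theta> \<phi> s a s'"
    and th: "\<theta> \<in> \<Theta>" and bd: "bounded \<Theta>"
  shows "\<forall>h s. Max (range (\<lambda>a. Qpi_aux (trans_prob \<theta> \<phi>) r \<pi> h n s a)) \<le> Vhat_aux r \<phi> \<Theta> n s"
proof (induction n)
  case 0
  then show ?case by simp
next
  case (Suc n)
  show ?case
  proof (intro allI)
    fix h s
    have "\<And>a. Qpi_aux (trans_prob \<theta> \<phi>) r \<pi> h (Suc n) s a \<le> Qopt_step r \<phi> \<Theta> (Vhat_aux r \<phi> \<Theta> n) s a"
      using Q_step[OF P_nonneg th bd] Suc.IH by blast
    also have "\<And>a. Qopt_step r \<phi> \<Theta> (Vhat_aux r \<phi> \<Theta> n) s a \<le> Vhat_aux r \<phi> \<Theta> (Suc n) s"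
      by simp
    finally show "Max (range (\<lambda>a. Qpi_aux (trans_prob \<theta> \<phi>) r \<pi> h (Suc n) s a)) \<le> Vhat_aux r \<phi> \<Theta> (Suc n) s"
      by (simp add: Max_le_iff)
  qed
qed

theorem lemmaC2:
  fixes r :: "'s::finite \<Rightarrow> 'act::finite \<Rightarrow> real"
    and \<phi> :: "'s \<Rightarrow> 'act \<Rightarrow> 's \<Rightarrow> real^'d::finite"
    and \<theta>star :: "real^'d"
    and H :: nat
    and \<pi>star :: "nat \<Rightarrow> 's \<Rightarrow> 'act"
    and cB cC :: "nat \<Rightarrow> real^'d"
    and AB AC :: "nat \<Rightarrow> real^'d^'d"
    and \<beta>B \<beta>C :: "nat \<Rightarrow> real"
  assumes r_range: "\<And>s a. 0 \<le> r s a \<and> r s a \<le> 1"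
    and P_nonneg: "\<And>s a s'. 0 \<le> trans_prob \<theta>star \<phi> s a s'"
    and P_sum: "\<And>s a. (\<Sum>s'\<in>UNIV. trans_prob \<theta>star \<phi> s a s') = 1"
    and opt: "\<And>\<pi> h s. 1 \<le> h \<Longrightarrow> h \<le> H + 1 \<Longrightarrow>
                Vpi (trans_prob \<theta>star \<phi>) r H \<pi> h s \<le> Vpi (trans_prob \<theta>star \<phi>) r H \<pi>star h s"
    and B_pd: "\<And>k. pos_def_matrix (AB k)"
    and C_pd: "\<And>k. pos_def_matrix (AC k)"
    and E0: "\<And>k. 1 \<le> k \<Longrightarrow>
               \<theta>star \<in> ellipsoid (cB k) (AB k) (\<beta>B k) \<inter> ellipsoid (cC k) (AC k) (\<beta>C k)"
  shows "\<forall>k\<ge>1. \<forall>h. 1 \<le> h \<and> h \<le> H + 1 \<longrightarrow> (\<forall>s a.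
           Qpi (trans_prob \<theta>star \<phi>) r H \<pi>star h s a
             \<le> Qhat r \<phi> H (ellipsoid (cB k) (AB k) (\<beta>B k) \<inter> ellipsoid (cC k) (AC k) (\<beta>C k)) h s a
         \<and> Max (range (\<lambda>a'. Qpi (trans_prob \<theta>star \<phi>) r H \<pi>star h s a'))
             \<le> Vhat r \<phi> H (ellipsoid (cB k) (AB k) (\<beta>B k) \<inter> ellipsoid (cC k) (AC k) (\<beta>C k)) h s)"
proof (intro allI impI)
  fix k h s a assume k: "1 \<le> (k::nat)" and h: "1 \<le> h \<and> h \<le> H + 1"
  let ?T = "ellipsoid (cB k) (AB k) (\<beta>B k) \<inter> ellipsoid (cC k) (AC k) (\<beta>C k)"
  have th: "\<theta>star \<in> ?T" using E0 k by blast
  have bd: "bounded ?T" using ellipsoid_bounded[OF B_pd] bounded_Int by blast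
  note V = V_ind[OF P_nonneg th bd]
  have Q: "Qpi (trans_prob \<theta>star \<phi>) r H \<pi>star h s a \<le> Qhat r \<phi> H ?T h s a"
  proof (cases "h \<le> H")
    case True
    hence e: "H + 1 - h = Suc (H - h)" by simp
    show ?thesis unfolding Qpi_def Qhat_def e using True
      using Q_step[OF P_nonneg th bd] V by simp
  next
    case False
    hence "H + 1 - h = 0" using h by simp
    thus ?thesis unfolding Qpi_def Qhat_def using False by simp
  qed
  moreover have "Max (range (\<lambda>a'. Qpi (trans_prob \<theta>star \<phi>) r H \<pi>star h s a')) \<le> Vhat r \<phi> H ?T h s"
    unfolding Qpi_def Vhat_def using V by blast
  ultimately show "Qpi (trans_prob \<theta>star \<phi>) r H \<pi>star h s a \<le> Qhat r \<phi> H ?T h s a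
     \<and> Max (range (\<lambda>a'. Qpi (trans_prob \<theta>star \<phi>) r H \<pi>star h s a')) \<le> Vhat r \<phi> H ?T h s" by blast
qed

end
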